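(* Let $\Lambda$ be an ordered abelian group and $(X,d)$ a geodesic $\Lambda$-metric space such that $(x\cdot y)_z\in\Lambda$ for all $x,y,z\in X$. For $\delta\in\Lambda$, $\delta\geqslant 0$, consider the properties: (H1,$\delta$): $(X,d)$ is $\delta$-hyperbolic; (H2,$\delta$): every geodesic triangle in $X$ is $\delta$-thin; (H3,$\delta$): for every geodesic triangle with sides $[x,y],[y,z],[x,z]$ and every $u\in[x,y]$ there exists $w\in[x,z]\cup[y,z]$ with $d(u,w)\leqslant\delta$. Then (H1,$\delta$)$\Rightarrow$(H2,$4\delta$), (H2,$\delta$)$\Rightarrow$(H1,$2\delta$), (H2,$\delta$)$\Rightarrow$(H3,$\delta$), (H3,$\delta$)$\Rightarrow$(H2,$4\delta$), (H1,$\delta$)$\Rightarrow$(H3,$4\delta$), and (H3,$\delta$)$\Rightarrow$(H1,$8\delta$).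
   Context: An ordered abelian group is an abelian group with a total order compatible with addition; $\Lambda_{\mathbb{Q}}$ is its ordered divisible hull containing $\Lambda$. A $\Lambda$-metric space is a set $X$ with $d:X\times X\to\Lambda$ satisfying $d\geqslant0$, $d(x,y)=0\iff x=y$, symmetry and the triangle inequality. Gromov product: $(x\cdot y)_v=\tfrac12(d(x,v)+d(y,v)-d(x,y))\in\Lambda_{\mathbb{Q}}$. $X$ is $\delta$-hyperbolic if $(x\cdot y)_v\geqslant\min\{(x\cdot z)_v,(z\cdot y)_v\}-\delta$ for all $v,x,y,z\in X$. A segment $[p,q]$ is the image of an isometric map $\alpha:\{t\in\Lambda:a\leqslant t\leqslant b\}\to X$ (metric $|s-t|$) with $\alpha(a)=p,\alpha(b)=q$; $X$ is geodesic if any two points are endpoints of a segment. A geodesic triangle $\Delta(x,y,z)$ is a union of chosen segments $[x,y],[y,z],[x,z]$. It is $\delta$-thin if for each vertex, say $x$ (and likewise for $y$ and $z$), and all $u\in[x,y]$, $v\in[x,z]$ with $d(x,u)=d(x,v)\leqslant(y\cdot z)_x$, one has $d(u,v)\leqslant\delta$ (equivalently: points identified by the natural map of the triangle onto its comparison $\Lambda$-tripod are at distance $\leqslant\delta$). *)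

theory Defs
  imports Main
begin

text \<open>Lambda is modelled by a type 'a of class linordered_ab_group_add (ordered abelian group);
the Lambda-metric space X is the whole type 'b with distance d :: 'b => 'b => 'a.\<close>

definition lambda_metric :: "('b \<Rightarrow> 'b \<Rightarrow> 'a::linordered_ab_group_add) \<Rightarrow> bool" where
  "lambda_metric d \<longleftrightarrow>
     (\<forall>x y. d x y \<ge> 0) \<and> (\<forall>x y. d x y = 0 \<longleftrightarrow> x = y) \<and> (\<forall>x y. d x y = d y x) \<and>
     (\<forall>x y z. d x z \<le> d x y + d y z)"

text \<open>The Gromov product, under the standing hypothesis that it lies in Lambda:
the unique g in Lambda with 2g = d(x,v) + d(y,v) - d(x,y).\<close>
definition gromov :: "('b \<Rightarrow> 'b \<Rightarrow> 'a::linordered_ab_group_add) \<Rightarrow> 'b \<Rightarrow> 'b \<Rightarrow> 'b \<Rightarrow> 'a" where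
  "gromov d x y v = (THE g. g + g = d x v + d y v - d x y)"

definition gromov_in_lambda :: "('b \<Rightarrow> 'b \<Rightarrow> 'a::linordered_ab_group_add) \<Rightarrow> bool" where
  "gromov_in_lambda d \<longleftrightarrow> (\<forall>x y v. \<exists>g. g + g = d x v + d y v - d x y)"

definition hyperbolic :: "('b \<Rightarrow> 'b \<Rightarrow> 'a::linordered_ab_group_add) \<Rightarrow> 'a \<Rightarrow> bool" where
  "hyperbolic d \<delta> \<longleftrightarrow>
     (\<forall>v x y z. gromov d x y v \<ge> min (gromov d x z v) (gromov d z y v) - \<delta>)"

definition is_segment :: "('b \<Rightarrow> 'b \<Rightarrow> 'a::linordered_ab_group_add) \<Rightarrow> 'b set \<Rightarrow> 'b \<Rightarrow> 'b \<Rightarrow> bool" where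
  "is_segment d S p q \<longleftrightarrow>
     (\<exists>(\<alpha>::'a \<Rightarrow> 'b) a b. a \<le> b \<and>
        (\<forall>s\<in>{a..b}. \<forall>t\<in>{a..b}. d (\<alpha> s) (\<alpha> t) = max (s - t) (t - s)) \<and>
        \<alpha> a = p \<and> \<alpha> b = q \<and> S = \<alpha> ` {a..b})"

definition geodesic :: "('b \<Rightarrow> 'b \<Rightarrow> 'a::linordered_ab_group_add) \<Rightarrow> bool" where
  "geodesic d \<longleftrightarrow> (\<forall>p q. \<exists>S. is_segment d S p q)"

definition thin_triangle :: "('b \<Rightarrow> 'b \<Rightarrow> 'a::linordered_ab_group_add) \<Rightarrow> 'a \<Rightarrow>
    'b \<Rightarrow> 'b \<Rightarrow> 'b \<Rightarrow> 'b set \<Rightarrow> 'b set \<Rightarrow> 'b set \<Rightarrow> bool" where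
  "thin_triangle d \<delta> x y z Sxy Syz Sxz \<longleftrightarrow>
     (\<forall>u\<in>Sxy. \<forall>v\<in>Sxz. d x u = d x v \<and> d x u \<le> gromov d y z x \<longrightarrow> d u v \<le> \<delta>) \<and>
     (\<forall>u\<in>Sxy. \<forall>v\<in>Syz. d y u = d y v \<and> d y u \<le> gromov d x z y \<longrightarrow> d u v \<le> \<delta>) \<and>
     (\<forall>u\<in>Sxz. \<forall>v\<in>Syz. d z u = d z v \<and> d z u \<le> gromov d x y z \<longrightarrow> d u v \<le> \<delta>)"

definition H1 :: "('b \<Rightarrow> 'b \<Rightarrow> 'a::linordered_ab_group_add) \<Rightarrow> 'a \<Rightarrow> bool" where
  "H1 d \<delta> \<longleftrightarrow> hyperbolic d \<delta>"

definition H2 :: "('b \<Rightarrow> 'b \<Rightarrow> 'a::linordered_ab_group_add) \<Rightarrow> 'a \<Rightarrow> bool" where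
  "H2 d \<delta> \<longleftrightarrow> (\<forall>x y z Sxy Syz Sxz.
     is_segment d Sxy x y \<and> is_segment d Syz y z \<and> is_segment d Sxz x z \<longrightarrow>
     thin_triangle d \<delta> x y z Sxy Syz Sxz)"

definition H3 :: "('b \<Rightarrow> 'b \<Rightarrow> 'a::linordered_ab_group_add) \<Rightarrow> 'a \<Rightarrow> bool" where
  "H3 d \<delta> \<longleftrightarrow> (\<forall>x y z Sxy Syz Sxz.
     is_segment d Sxy x y \<and> is_segment d Syz y z \<and> is_segment d Sxz x z \<longrightarrow>
     (\<forall>u\<in>Sxy. \<exists>w\<in>Sxz \<union> Syz. d u w \<le> \<delta>))"

end

theory Submission
  imports Defs
begin


definition seg :: "('b \<Rightarrow> 'b \<Rightarrow> 'a::linordered_ab_group_add) \<Rightarrow> 'b set \<Rightarrow> 'b \<Rightarrow> 'b \<Rightarrow> bool" where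
  "seg d S p q \<longleftrightarrow> (\<forall>u\<in>S. d p u + d u q = d p q) \<and>
     (\<forall>t. 0 \<le> t \<and> t \<le> d p q \<longrightarrow> (\<exists>u\<in>S. d p u = t)) \<and>
     (\<forall>u\<in>S. \<forall>v\<in>S. d p v \<le> d p u \<longrightarrow> d u v = d p u - d p v)"

lemma dbl_le: fixes g h :: "'a::linordered_ab_group_add"
  assumes "g + g \<le> h + h" shows "g \<le> h"
  using assms by (metis add_strict_mono not_le)

lemma dbl_eq: fixes g h :: "'a::linordered_ab_group_add"
  assumes "g + g = h + h" shows "g = h"
  using assms by (metis dbl_le order_refl antisym)

lemma gromov_eq:
  assumes "gromov_in_lambda d"
  shows "gromov d x y v + gromov d x y v = d x v + d y v - d x y"
proof -
  from assms obtain g where g: "g + g = d x v + d y v - d x y"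
    unfolding gromov_in_lambda_def by blast
  have "\<exists>!g. g + g = d x v + d y v - d x y"
    using g dbl_eq by metis
  then show ?thesis unfolding gromov_def by (rule theI')
qed

lemma maxd: fixes a s :: "'a::linordered_ab_group_add"
  assumes "a \<le> s" shows "max (a - s) (s - a) = s - a" "max (s - a) (a - s) = s - a"
proof -
  have "a - s \<le> s - a" using assms by (meson order_trans diff_ge_0_iff_ge diff_le_0_iff_le)
  then show "max (a - s) (s - a) = s - a" "max (s - a) (a - s) = s - a" by (auto simp: max_def)
qed

lemma lm_nonneg: "lambda_metric d \<Longrightarrow> 0 \<le> d x y" unfolding lambda_metric_def by blast
lemma lm_sym: "lambda_metric d \<Longrightarrow> d x y = d y x" unfolding lambda_metric_def by blast
lemma lm_tri: "lambda_metric d \<Longrightarrow> d x z \<le> d x y + d y z" unfolding lambda_metric_def by blast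
lemma lm_zero: "lambda_metric d \<Longrightarrow> d x x = 0" unfolding lambda_metric_def by blast

lemma is_segment_seg:
  assumes M: "lambda_metric d" and S: "is_segment d S p q"
  shows "seg d S p q"
proof -
  from S obtain \<alpha> a b where ab: "a \<le> b"
    and iso: "\<forall>s\<in>{a..b}. \<forall>t\<in>{a..b}. d (\<alpha> s) (\<alpha> t) = max (s - t) (t - s)"
    and pa: "\<alpha> a = p" and qb: "\<alpha> b = q" and SS: "S = \<alpha> ` {a..b}"
    unfolding is_segment_def by blast
  have dp: "d p (\<alpha> s) = s - a" if "s \<in> {a..b}" for s
    using iso[rule_format, of a s] that ab pa maxd by auto
  have dq: "d (\<alpha> s) q = b - s" if "s \<in> {a..b}" for s
    using iso[rule_format, of s b] that ab qb maxd by auto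
  have dpq: "d p q = b - a" using dp[of b] ab qb by auto
  show ?thesis unfolding seg_def
  proof (intro conjI ballI allI impI)
    fix u assume "u \<in> S"
    then obtain s where s: "s \<in> {a..b}" "u = \<alpha> s" using SS by auto
    have "d p u + d u q = (s - a) + (b - s)" by (simp only: s(2) dp[OF s(1)] dq[OF s(1)])
    also have "\<dots> = b - a" by (simp add: algebra_simps)
    finally show "d p u + d u q = d p q" using dpq by simp
  next
    fix t assume t: "0 \<le> t \<and> t \<le> d p q"
    have "a + t \<in> {a..b}" using t dpq
      by (auto simp: algebra_simps)
    then show "\<exists>u\<in>S. d p u = t" using dp SS by (intro bexI[of _ "\<alpha> (a + t)"]) auto
  next
    fix u v assume u: "u \<in> S" and v: "v \<in> S" and le: "d p v \<le> d p u"
    obtain s where s: "s \<in> {a..b}" "u = \<alpha> s" using u SS by auto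
    obtain s' where s': "s' \<in> {a..b}" "v = \<alpha> s'" using v SS by auto
    have "s' \<le> s" using le dp[OF s(1)] dp[OF s'(1)] s s' by simp
    then show "d u v = d p u - d p v"
      using iso[rule_format, OF s(1) s'(1)] dp[OF s(1)] dp[OF s'(1)] s s'
maxd by simp
  qed
qed

lemma is_segment_sym:
  assumes S: "is_segment d S p q"
  shows "is_segment d S q p"
proof -
  from S obtain \<alpha> a b where ab: "a \<le> b"
    and iso: "\<forall>s\<in>{a..b}. \<forall>t\<in>{a..b}. d (\<alpha> s) (\<alpha> t) = max (s - t) (t - s)"
    and pa: "\<alpha> a = p" and qb: "\<alpha> b = q" and SS: "S = \<alpha> ` {a..b}"
    unfolding is_segment_def by blast
  define \<beta> where "\<beta> = (\<lambda>t. \<alpha> (a + b - t))"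
  have refl: "a + b - t \<in> {a..b}" if "t \<in> {a..b}" for t
    using that by (auto simp: algebra_simps le_diff_eq diff_le_eq)
  have "\<beta> ` {a..b} = \<alpha> ` {a..b}"
  proof
    show "\<beta> ` {a..b} \<subseteq> \<alpha> ` {a..b}" using refl unfolding \<beta>_def by auto
    show "\<alpha> ` {a..b} \<subseteq> \<beta> ` {a..b}"
    proof
      fix x assume "x \<in> \<alpha> ` {a..b}"
      then obtain s where s: "s \<in> {a..b}" "x = \<alpha> s" by auto
      have "x = \<beta> (a + b - s)" unfolding \<beta>_def using s by simp
      then show "x \<in> \<beta> ` {a..b}" using refl[OF s(1)] by blast
    qed
  qed
  moreover have "\<forall>s\<in>{a..b}. \<forall>t\<in>{a..b}. d (\<beta> s) (\<beta> t) = max (s - t) (t - s)"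
  proof (intro ballI)
    fix s t assume s: "s \<in> {a..b}" and t: "t \<in> {a..b}"
    have "d (\<beta> s) (\<beta> t) = max ((a + b - s) - (a + b - t)) ((a + b - t) - (a + b - s))"
      unfolding \<beta>_def using iso refl s t by blast
    also have "\<dots> = max (s - t) (t - s)" by (simp add: algebra_simps max.commute)
    finally show "d (\<beta> s) (\<beta> t) = max (s - t) (t - s)" .
  qed
  moreover have "\<beta> a = q" "\<beta> b = p" unfolding \<beta>_def using pa qb by simp_all
  ultimately show ?thesis unfolding is_segment_def using ab SS by metis
qed



lemma gromov_comm:
  assumes M: "lambda_metric d" shows "gromov d x y v = gromov d y x v"
  unfolding gromov_def using lm_sym[OF M, of x y] by (simp add: add.commute)

lemma gromov_nonneg:
  fixes d :: "'b \<Rightarrow> 'b \<Rightarrow> 'a::linordered_ab_group_add"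
  assumes M: "lambda_metric d" and G: "gromov_in_lambda d"
  shows "0 \<le> gromov d x y v"
proof -
  have t: "d x y \<le> d x v + d v y" by (rule lm_tri[OF M])
  have "(0::'a) + 0 \<le> gromov d x y v + gromov d x y v"
    unfolding gromov_eq[OF G] using t lm_sym[OF M, of v y] by (simp add: algebra_simps)
  then show ?thesis by (rule dbl_le)
qed

lemma gromov_le:
  assumes M: "lambda_metric d" and G: "gromov_in_lambda d"
  shows "gromov d y z x \<le> d x z"
proof -
  have t: "d y x \<le> d y z + d z x" by (rule lm_tri[OF M])
  have "gromov d y z x + gromov d y z x \<le> d x z + d x z"
    unfolding gromov_eq[OF G] using t lm_sym[OF M, of z x] by (simp add: algebra_simps)
  then show ?thesis by (rule dbl_le)
qed

lemma gromov_sum: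
  assumes M: "lambda_metric d" and G: "gromov_in_lambda d"
  shows "gromov d y z x + gromov d x z y = d x y"
proof -
  have "(gromov d y z x + gromov d x z y) + (gromov d y z x + gromov d x z y)
      = (gromov d y z x + gromov d y z x) + (gromov d x z y + gromov d x z y)"
    by (simp add: algebra_simps)
  also have "\<dots> = d x y + d x y"
    unfolding gromov_eq[OF G] using lm_sym[OF M, of y x] lm_sym[OF M, of z x] lm_sym[OF M, of z y]
    by (simp add: algebra_simps)
  finally show ?thesis by (rule dbl_eq)
qed

lemma gromov_le_dist:
  assumes M: "lambda_metric d" and G: "gromov_in_lambda d"
    and S: "seg d S x z" and w: "w \<in> S"
  shows "gromov d x z v \<le> d v w"
proof -
  have e: "d x w + d w z = d x z" using S w unfolding seg_def by blast
  have t1: "d x v \<le> d x w + d w v" by (rule lm_tri[OF M])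
  have t2: "d z v \<le> d z w + d w v" by (rule lm_tri[OF M])
  have "d x v + d z v \<le> (d x w + d w v) + (d z w + d w v)" using add_mono[OF t1 t2] .
  then have "gromov d x z v + gromov d x z v \<le> d v w + d v w"
    unfolding gromov_eq[OF G] using e lm_sym[OF M, of w z] lm_sym[OF M, of w v]
    by (simp add: algebra_simps)
  then show ?thesis by (rule dbl_le)
qed

lemma seg_close:
  assumes M: "lambda_metric d" and S: "seg d S p q" and w: "w \<in> S" and w': "w' \<in> S"
    and h1: "d p w \<le> d p w' + e" and h2: "d p w' \<le> d p w + e"
  shows "d w w' \<le> e"
proof (cases "d p w' \<le> d p w")
  case True
  then have "d w w' = d p w - d p w'" using S w w' unfolding seg_def by blast
  moreover have "d p w - d p w' \<le> e" using h1 by (simp add: diff_le_eq add.commute)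
  ultimately show ?thesis by simp
next
  case False
  then have "d w' w = d p w' - d p w" using S w w' unfolding seg_def by auto
  moreover have "d p w' - d p w \<le> e" using h2 by (simp add: diff_le_eq add.commute)
  ultimately show ?thesis using lm_sym[OF M, of w w'] by simp
qed

lemma seg_exists:
  assumes "seg d S p q" "0 \<le> t" "t \<le> d p q"
  shows "\<exists>u\<in>S. d p u = t"
  using assms unfolding seg_def by blast

lemma seg_eq:
  assumes "seg d S p q" "u \<in> S"
  shows "d p u + d u q = d p q"
  using assms unfolding seg_def by blast



lemma H2_H3:
  fixes d :: "'b \<Rightarrow> 'b \<Rightarrow> 'a::linordered_ab_group_add"
  assumes M: "lambda_metric d" and G: "gromov_in_lambda d" and H: "H2 d \<delta>"
  shows "H3 d \<delta>"
  unfolding H3_def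
proof (intro allI impI ballI)
  fix x y z Sxy Syz Sxz u
  assume segs: "is_segment d Sxy x y \<and> is_segment d Syz y z \<and> is_segment d Sxz x z"
    and u: "u \<in> Sxy"
  have thin: "thin_triangle d \<delta> x y z Sxy Syz Sxz" using H segs unfolding H2_def by blast
  have s1: "seg d Sxy x y" and s2: "seg d Sxz x z" and s3: "seg d Syz y z"
    using segs is_segment_seg[OF M] by blast+
  show "\<exists>w\<in>Sxz \<union> Syz. d u w \<le> \<delta>"
  proof (cases "d x u \<le> gromov d y z x")
    case True
    have "d x u \<le> d x z" using True gromov_le[OF M G, of y z x] by simp
    then obtain v where v: "v \<in> Sxz" "d x v = d x u"
      using seg_exists[OF s2 lm_nonneg[OF M]] by blast
    then have "d u v \<le> \<delta>" using thin u True unfolding thin_triangle_def by auto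
    then show ?thesis using v by blast
  next
    case False
    then have lt: "gromov d y z x < d x u" by simp
    have e1: "d x u + d u y = d x y" by (rule seg_eq[OF s1 u])
    have e2: "gromov d y z x + gromov d x z y = d x y" by (rule gromov_sum[OF M G])
    have "gromov d y z x + d u y < d x u + d u y" using lt by simp
    then have "gromov d y z x + d u y < gromov d y z x + gromov d x z y" using e1 e2 by simp
    then have lt2: "d u y < gromov d x z y" by simp
    have "d y u \<le> d y z" using lt2 gromov_le[OF M G, of x z y] lm_sym[OF M, of u y] by simp
    then obtain v where v: "v \<in> Syz" "d y v = d y u"
      using seg_exists[OF s3 lm_nonneg[OF M]] by blast
    have "d y u \<le> gromov d x z y" using lt2 lm_sym[OF M, of u y] by simp
    then have "d u v \<le> \<delta>" using thin u v unfolding thin_triangle_def by auto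
    then show ?thesis using v by blast
  qed
qed

lemma H2_H1:
  fixes d :: "'b \<Rightarrow> 'b \<Rightarrow> 'a::linordered_ab_group_add"
  assumes M: "lambda_metric d" and Geo: "geodesic d" and G: "gromov_in_lambda d" and H: "H2 d \<delta>"
  shows "H1 d (\<delta> + \<delta>)"
  unfolding H1_def hyperbolic_def
proof (intro allI)
  fix v x y z
  obtain Sxy where sxy: "is_segment d Sxy x y" using Geo unfolding geodesic_def by blast
  obtain Syz where syz: "is_segment d Syz y z" using Geo unfolding geodesic_def by blast
  obtain Sxz where sxz: "is_segment d Sxz x z" using Geo unfolding geodesic_def by blast
  obtain Sxv where sxv: "is_segment d Sxv x v" using Geo unfolding geodesic_def by blast
  obtain Syv where syv: "is_segment d Syv y v" using Geo unfolding geodesic_def by blast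
  have thin: "thin_triangle d \<delta> x y v Sxy Syv Sxv" using H sxy syv sxv unfolding H2_def by blast
  have s1: "seg d Sxy x y" and s2: "seg d Sxv x v"
    using sxy sxv is_segment_seg[OF M] by blast+
  define g where "g = gromov d y v x"
  have g0: "0 \<le> g" unfolding g_def by (rule gromov_nonneg[OF M G])
  have g1: "g \<le> d x y" unfolding g_def using gromov_le[OF M G, of v y x] gromov_comm[OF M, of v y x] by simp
  have g2: "g \<le> d x v" unfolding g_def using gromov_le[OF M G, of y v x] by simp
  obtain p' where p': "p' \<in> Sxy" "d x p' = g" using seg_exists[OF s1 g0 g1] by blast
  obtain p where p: "p \<in> Sxv" "d x p = g" using seg_exists[OF s2 g0 g2] by blast
  have dpp: "d p' p \<le> \<delta>" using thin p p' unfolding thin_triangle_def g_def by auto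
  have e1: "d x p + d p v = d x v" by (rule seg_eq[OF s2 p(1)])
  have e2: "gromov d v y x + gromov d x y v = d x v" by (rule gromov_sum[OF M G])
  have "g + d p v = g + gromov d x y v"
    using e1 e2 p(2) gromov_comm[OF M, of v y x] unfolding g_def by simp
  then have dpv: "d p v = gromov d x y v" by simp
  have "d v p' \<le> d v p + d p p'" by (rule lm_tri[OF M])
  also have "\<dots> \<le> gromov d x y v + \<delta>"
    using dpv dpp lm_sym[OF M, of p v] lm_sym[OF M, of p p'] by simp
  finally have vp': "d v p' \<le> gromov d x y v + \<delta>" .
  have "H3 d \<delta>" by (rule H2_H3[OF M G H])
  then obtain w where w: "w \<in> Sxz \<union> Syz" "d p' w \<le> \<delta>"
    using sxy syz sxz p'(1) unfolding H3_def by blast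
  have "d v w \<le> d v p' + d p' w" by (rule lm_tri[OF M])
  also have "\<dots> \<le> (gromov d x y v + \<delta>) + \<delta>" using vp' w(2) by (rule add_mono)
  finally have vw: "d v w \<le> gromov d x y v + (\<delta> + \<delta>)" by (simp add: add.assoc)
  have "min (gromov d x z v) (gromov d z y v) \<le> d v w"
  proof (cases "w \<in> Sxz")
    case True
    then have "gromov d x z v \<le> d v w"
      using gromov_le_dist[OF M G _ True] sxz is_segment_seg[OF M] by blast
    then show ?thesis by (simp add: min.coboundedI1)
  next
    case False
    then have wy: "w \<in> Syz" using w by blast
    then have "gromov d y z v \<le> d v w"
      using gromov_le_dist[OF M G _ wy] syz is_segment_seg[OF M] by blast
    then show ?thesis using gromov_comm[OF M, of y z v] by (simp add: min.coboundedI2)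
  qed
  with vw have "min (gromov d x z v) (gromov d z y v) \<le> gromov d x y v + (\<delta> + \<delta>)" by simp
  then show "min (gromov d x z v) (gromov d z y v) - (\<delta> + \<delta>) \<le> gromov d x y v"
    by (simp add: diff_le_eq)
qed



lemma gromov_on_seg:
  fixes d :: "'b \<Rightarrow> 'b \<Rightarrow> 'a::linordered_ab_group_add"
  assumes M: "lambda_metric d" and G: "gromov_in_lambda d"
    and S: "seg d S x y" and u: "u \<in> S"
  shows "gromov d u y x = d x u"
proof -
  have e: "d x u + d u y = d x y" by (rule seg_eq[OF S u])
  have "gromov d u y x + gromov d u y x = d x u + d x u"
    unfolding gromov_eq[OF G] using e lm_sym[OF M, of u x] lm_sym[OF M, of y x]
    by (simp add: algebra_simps)
  then show ?thesis by (rule dbl_eq)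
qed

lemma H1_vertex:
  fixes d :: "'b \<Rightarrow> 'b \<Rightarrow> 'a::linordered_ab_group_add"
  assumes M: "lambda_metric d" and G: "gromov_in_lambda d" and H: "hyperbolic d \<delta>"
    and d0: "0 \<le> \<delta>"
    and S1: "seg d S1 x y" and S2: "seg d S2 x z" and u: "u \<in> S1" and v: "v \<in> S2"
    and tu: "d x u = t" and tv: "d x v = t" and tle: "t \<le> gromov d y z x"
  shows "d u v \<le> \<delta> + \<delta> + \<delta> + \<delta>"
proof -
  have g1: "gromov d u y x = t" using gromov_on_seg[OF M G S1 u] tu by simp
  have g2: "gromov d z v x = t" using gromov_on_seg[OF M G S2 v] tv gromov_comm[OF M, of z v x] by simp
  have h1: "min (gromov d u y x) (gromov d y v x) - \<delta> \<le> gromov d u v x"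
    using H unfolding hyperbolic_def by blast
  have h2: "min (gromov d y z x) (gromov d z v x) - \<delta> \<le> gromov d y v x"
    using H unfolding hyperbolic_def by blast
  have "min (gromov d y z x) (gromov d z v x) = t" using g2 tle by (simp add: min_def)
  with h2 have h2': "t - \<delta> \<le> gromov d y v x" by simp
  have "t - \<delta> \<le> t" using d0 by simp
  then have "t - \<delta> \<le> min (gromov d u y x) (gromov d y v x)" using g1 h2' by simp
  then have tt: "t - \<delta> - \<delta> \<le> gromov d u v x" using h1 diff_right_mono[of "t - \<delta>" _ \<delta>] order_trans by blast
  have "(t - \<delta> - \<delta>) + (t - \<delta> - \<delta>) \<le> gromov d u v x + gromov d u v x" using add_mono[OF tt tt] .
  also have "\<dots> = t + t - d u v" unfolding gromov_eq[OF G] using tu tv lm_sym[OF M, of u x] lm_sym[OF M, of v x]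
    by simp
  finally have "(t - \<delta> - \<delta>) + (t - \<delta> - \<delta>) \<le> t + t - d u v" .
  then show ?thesis by (simp add: algebra_simps)
qed

lemma H1_H2:
  fixes d :: "'b \<Rightarrow> 'b \<Rightarrow> 'a::linordered_ab_group_add"
  assumes M: "lambda_metric d" and G: "gromov_in_lambda d" and H: "H1 d \<delta>" and d0: "0 \<le> \<delta>"
  shows "H2 d (\<delta> + \<delta> + \<delta> + \<delta>)"
  unfolding H2_def
proof (intro allI impI)
  fix x y z Sxy Syz Sxz
  assume segs: "is_segment d Sxy x y \<and> is_segment d Syz y z \<and> is_segment d Sxz x z"
  have hyp: "hyperbolic d \<delta>" using H unfolding H1_def .
  from segs have i1: "is_segment d Sxy x y" and i2: "is_segment d Syz y z" and i3: "is_segment d Sxz x z"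
    by simp_all
  have a: "seg d Sxy x y" "seg d Sxy y x" "seg d Syz y z" "seg d Syz z y" "seg d Sxz x z" "seg d Sxz z x"
    using is_segment_seg[OF M i1] is_segment_seg[OF M is_segment_sym[OF i1]]
      is_segment_seg[OF M i2] is_segment_seg[OF M is_segment_sym[OF i2]]
      is_segment_seg[OF M i3] is_segment_seg[OF M is_segment_sym[OF i3]] by simp_all
  show "thin_triangle d (\<delta> + \<delta> + \<delta> + \<delta>) x y z Sxy Syz Sxz"
    unfolding thin_triangle_def
  proof (intro conjI ballI impI)
    fix u v assume u: "u \<in> Sxy" and v: "v \<in> Sxz" and c: "d x u = d x v \<and> d x u \<le> gromov d y z x"
    note c1 = conjunct1[OF c, symmetric] and c2 = conjunct2[OF c]
    show "d u v \<le> \<delta> + \<delta> + \<delta> + \<delta>"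
      by (rule H1_vertex[OF M G hyp d0 a(1) a(5) u v refl c1 c2])
  next
    fix u v assume u: "u \<in> Sxy" and v: "v \<in> Syz" and c: "d y u = d y v \<and> d y u \<le> gromov d x z y"
    note c1 = conjunct1[OF c, symmetric] and c2 = conjunct2[OF c]
    show "d u v \<le> \<delta> + \<delta> + \<delta> + \<delta>"
      by (rule H1_vertex[OF M G hyp d0 a(2) a(3) u v refl c1 c2])
  next
    fix u v assume u: "u \<in> Sxz" and v: "v \<in> Syz" and c: "d z u = d z v \<and> d z u \<le> gromov d x y z"
    note c1 = conjunct1[OF c, symmetric] and c2 = conjunct2[OF c]
    show "d u v \<le> \<delta> + \<delta> + \<delta> + \<delta>"
      by (rule H1_vertex[OF M G hyp d0 a(6) a(4) u v refl c1 c2])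
  qed
qed



lemma seg_near:
  fixes d :: "'b \<Rightarrow> 'b \<Rightarrow> 'a::linordered_ab_group_add"
  assumes M: "lambda_metric d" and S: "seg d S p q" and a: "a \<in> S" and w: "w \<in> S"
    and pc: "d p c = d p a" and cw: "d c w \<le> e"
  shows "d a w \<le> e"
proof (rule seg_close[OF M S a w])
  have "d p w \<le> d p c + d c w" by (rule lm_tri[OF M])
  also have "\<dots> \<le> d p a + e" using pc cw by simp
  finally show "d p w \<le> d p a + e" .
  have "d p c \<le> d p w + d w c" by (rule lm_tri[OF M])
  also have "\<dots> \<le> d p w + e" using cw lm_sym[OF M, of w c] by simp
  finally show "d p a \<le> d p w + e" using pc by simp
qed

lemma H3D:
  assumes "H3 d \<delta>" "is_segment d Sxy x y" "is_segment d Syz y z" "is_segment d Sxz x z" "u \<in> Sxy"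
  shows "\<exists>w\<in>Sxz \<union> Syz. d u w \<le> \<delta>"
  using assms unfolding H3_def by blast

lemma H3_vertex:
  fixes d :: "'b \<Rightarrow> 'b \<Rightarrow> 'a::linordered_ab_group_add"
  assumes M: "lambda_metric d" and G: "gromov_in_lambda d" and H: "H3 d \<delta>"
    and d0: "0 \<le> \<delta>"
    and i1: "is_segment d S1 x y" and i2: "is_segment d S2 x z" and i3: "is_segment d S3 y z"
    and u: "u \<in> S1" and v: "v \<in> S2"
    and tu: "d x u = t" and tv: "d x v = t" and tle: "t \<le> gromov d y z x"
  shows "d u v \<le> \<delta> + \<delta> + \<delta> + \<delta>"
proof -
  have s1: "seg d S1 x y" by (rule is_segment_seg[OF M i1])
  have s2: "seg d S2 x z" by (rule is_segment_seg[OF M i2])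
  have s3: "seg d S3 y z" by (rule is_segment_seg[OF M i3])
  have s3': "seg d S3 z y" by (rule is_segment_seg[OF M is_segment_sym[OF i3]])
  obtain w where w: "w \<in> S2 \<union> S3" and uw: "d u w \<le> \<delta>" using H3D[OF H i1 i3 i2 u] by blast
  obtain w2 where w2: "w2 \<in> S1 \<union> S3" and vw2: "d v w2 \<le> \<delta>"
    using H3D[OF H i2 is_segment_sym[OF i3] i1 v] by blast
  have dd: "\<delta> + \<delta> \<le> \<delta> + \<delta> + \<delta> + \<delta>" using d0 add_nonneg_nonneg[OF d0 d0]
    by (simp add: add.assoc add_increasing2)
  show ?thesis
  proof (cases "w \<in> S2")
    case True
    have "d v w \<le> \<delta>" by (rule seg_near[OF M s2 v True _ uw]) (simp add: tu tv)
    have "d u v \<le> d u w + d w v" by (rule lm_tri[OF M])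
    also have "\<dots> \<le> \<delta> + \<delta>" using uw \<open>d v w \<le> \<delta>\<close> lm_sym[OF M, of v w] by (simp add: add_mono)
    finally show ?thesis using dd by (rule order_trans)
  next
    case False
    then have w3: "w \<in> S3" using w by blast
    show ?thesis
    proof (cases "w2 \<in> S1")
      case True
      have "d u w2 \<le> \<delta>" by (rule seg_near[OF M s1 u True _ vw2]) (simp add: tu tv)
      have "d u v \<le> d u w2 + d w2 v" by (rule lm_tri[OF M])
      also have "\<dots> \<le> \<delta> + \<delta>" using vw2 \<open>d u w2 \<le> \<delta>\<close> lm_sym[OF M, of v w2] by (simp add: add_mono)
      finally show ?thesis using dd by (rule order_trans)
    next
      case False
      then have w23: "w2 \<in> S3" using w2 by blast
      have e1: "d z v = d x z - t"
        using seg_eq[OF s2 v] tv lm_sym[OF M, of v z] by (simp add: algebra_simps)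
      have e2: "d z w = d y z - d y w"
        using seg_eq[OF s3 w3] lm_sym[OF M, of w z] by (simp add: algebra_simps)
      have e3: "d y u = d x y - t"
        using seg_eq[OF s1 u] tu lm_sym[OF M, of u y] by (simp add: algebra_simps)
      have f1: "d z w2 \<le> d z v + d v w2" using lm_tri[OF M, of z w2 v] lm_sym[OF M, of w2 v] by simp
      have f3: "d x z \<le> d x w + d z w" using lm_tri[OF M, of x z w] lm_sym[OF M, of w z] by simp
      have f4: "d x w \<le> d x u + d u w" by (rule lm_tri[OF M])
      have f6: "d y u \<le> d y w + d u w" using lm_tri[OF M, of y u w] lm_sym[OF M, of w u] by simp
      have f7: "d z v \<le> d z w2 + d v w2" using lm_tri[OF M, of z v w2] lm_sym[OF M, of w2 v] by simp
      have "t + t \<le> gromov d y z x + gromov d y z x" using add_mono[OF tle tle] .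
      then have gx: "t + t \<le> d x y + d x z - d y z"
        unfolding gromov_eq[OF G] using lm_sym[OF M, of y x] lm_sym[OF M, of z x] by simp
      have h2: "d z w2 \<le> d z w + (\<delta> + \<delta>)"
      proof -
        have "d z w2 + d v w2 + d x z + d x w + d u w
            \<le> (d z v + d v w2) + \<delta> + (d x w + d z w) + (d x u + d u w) + \<delta>"
          using add_mono[OF add_mono[OF add_mono[OF add_mono[OF f1 vw2] f3] f4] uw] by simp
        then show ?thesis using e1 tu by (simp add: algebra_simps)
      qed
      have h1: "d z w \<le> d z w2 + (\<delta> + \<delta>)"
      proof -
        have "d y u + d z v + (t + t) + (d u w + d v w2)
            \<le> (d y w + d u w) + (d z w2 + d v w2) + (d x y + d x z - d y z) + (\<delta> + \<delta>)"
          using add_mono[OF add_mono[OF add_mono[OF f6 f7] gx] add_mono[OF uw vw2]] by simp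
        then have X: "d y z \<le> \<delta> + (\<delta> + (d y w + d z w2))" using e1 e2 e3 by (simp add: algebra_simps)
        show ?thesis unfolding e2 using X by (simp add: diff_le_eq ac_simps)
      qed
      have ww: "d w w2 \<le> \<delta> + \<delta>" by (rule seg_close[OF M s3' w3 w23 h1 h2])
      have "d u v \<le> d u w + d w v" by (rule lm_tri[OF M])
      also have "\<dots> \<le> d u w + (d w w2 + d w2 v)" using lm_tri[OF M, of w v w2] by simp
      also have "\<dots> \<le> \<delta> + ((\<delta> + \<delta>) + \<delta>)"
        using uw ww vw2 lm_sym[OF M, of w2 v] by (simp add: add_mono)
      finally show ?thesis by (simp add: add.assoc)
    qed
  qed
qed



lemma H3_H2:
  fixes d :: "'b \<Rightarrow> 'b \<Rightarrow> 'a::linordered_ab_group_add"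
  assumes M: "lambda_metric d" and G: "gromov_in_lambda d" and H: "H3 d \<delta>" and d0: "0 \<le> \<delta>"
  shows "H2 d (\<delta> + \<delta> + \<delta> + \<delta>)"
  unfolding H2_def
proof (intro allI impI)
  fix x y z Sxy Syz Sxz
  assume segs: "is_segment d Sxy x y \<and> is_segment d Syz y z \<and> is_segment d Sxz x z"
  from segs have i1: "is_segment d Sxy x y" and i2: "is_segment d Syz y z" and i3: "is_segment d Sxz x z"
    by simp_all
  show "thin_triangle d (\<delta> + \<delta> + \<delta> + \<delta>) x y z Sxy Syz Sxz"
    unfolding thin_triangle_def
  proof (intro conjI ballI impI)
    fix u v assume u: "u \<in> Sxy" and v: "v \<in> Sxz" and c: "d x u = d x v \<and> d x u \<le> gromov d y z x"
    note c1 = conjunct1[OF c, symmetric] and c2 = conjunct2[OF c]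
    show "d u v \<le> \<delta> + \<delta> + \<delta> + \<delta>"
      by (rule H3_vertex[OF M G H d0 i1 i3 i2 u v refl c1 c2])
  next
    fix u v assume u: "u \<in> Sxy" and v: "v \<in> Syz" and c: "d y u = d y v \<and> d y u \<le> gromov d x z y"
    note c1 = conjunct1[OF c, symmetric] and c2 = conjunct2[OF c]
    show "d u v \<le> \<delta> + \<delta> + \<delta> + \<delta>"
      by (rule H3_vertex[OF M G H d0 is_segment_sym[OF i1] i2 i3 u v refl c1 c2])
  next
    fix u v assume u: "u \<in> Sxz" and v: "v \<in> Syz" and c: "d z u = d z v \<and> d z u \<le> gromov d x y z"
    note c1 = conjunct1[OF c, symmetric] and c2 = conjunct2[OF c]
    show "d u v \<le> \<delta> + \<delta> + \<delta> + \<delta>"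
      by (rule H3_vertex[OF M G H d0 is_segment_sym[OF i3] is_segment_sym[OF i2] i1 u v refl c1 c2])
  qed
qed

theorem proposition1p2p9:
  fixes d :: "'b \<Rightarrow> 'b \<Rightarrow> 'a::linordered_ab_group_add" and \<delta> :: 'a
  assumes "lambda_metric d" and "geodesic d" and "gromov_in_lambda d" and "\<delta> \<ge> 0"
  shows "(H1 d \<delta> \<longrightarrow> H2 d (\<delta> + \<delta> + \<delta> + \<delta>)) \<and>
         (H2 d \<delta> \<longrightarrow> H1 d (\<delta> + \<delta>)) \<and>
         (H2 d \<delta> \<longrightarrow> H3 d \<delta>) \<and>
         (H3 d \<delta> \<longrightarrow> H2 d (\<delta> + \<delta> + \<delta> + \<delta>)) \<and>
         (H1 d \<delta> \<longrightarrow> H3 d (\<delta> + \<delta> + \<delta> + \<delta>)) \<and>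
         (H3 d \<delta> \<longrightarrow> H1 d (\<delta> + \<delta> + \<delta> + \<delta> + \<delta> + \<delta> + \<delta> + \<delta>))"
proof (intro conjI impI)
  note M = assms(1) and Geo = assms(2) and G = assms(3) and d0 = assms(4)
  show "H2 d (\<delta> + \<delta> + \<delta> + \<delta>)" if "H1 d \<delta>" by (rule H1_H2[OF M G that d0])
  show "H1 d (\<delta> + \<delta>)" if "H2 d \<delta>" by (rule H2_H1[OF M Geo G that])
  show "H3 d \<delta>" if "H2 d \<delta>" by (rule H2_H3[OF M G that])
  show "H2 d (\<delta> + \<delta> + \<delta> + \<delta>)" if "H3 d \<delta>" by (rule H3_H2[OF M G that d0])
  show "H3 d (\<delta> + \<delta> + \<delta> + \<delta>)" if "H1 d \<delta>" by (rule H2_H3[OF M G H1_H2[OF M G that d0]])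
  show "H1 d (\<delta> + \<delta> + \<delta> + \<delta> + \<delta> + \<delta> + \<delta> + \<delta>)" if "H3 d \<delta>"
    using H2_H1[OF M Geo G H3_H2[OF M G that d0]] by (simp add: add.assoc)
qed

end
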